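(* Let $G$ be a simple graph with $n$ vertices $v_1,\dots,v_n$ and $m\ge1$ edges, where $d_i$ is the degree of $v_i$. Then $$\mathcal E(G)\ge\frac{2m}{\sqrt{\max_{1\le i\le n}\sum_{j:\,v_i\sim v_j}d_j}}.$$
   Context: The adjacency matrix of $G$ is $\mathrm{Adj}(G)=[a_{ij}]$ with $a_{ij}=1$ if $v_i$ is adjacent to $v_j$ (written $v_i\sim v_j$) and $0$ otherwise. If $\lambda_1(G),\dots,\lambda_n(G)$ are the eigenvalues of $\mathrm{Adj}(G)$, the energy of $G$ is $\mathcal E(G)=\sum_{i=1}^n|\lambda_i(G)|$. *)

theory Defs
  imports "Jordan_Normal_Form.Char_Poly"
begin

definition simple_graph :: "nat \<Rightarrow> (nat \<Rightarrow> nat \<Rightarrow> bool) \<Rightarrow> bool" where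
  "simple_graph n E \<longleftrightarrow> (\<forall>i<n. \<forall>j<n. E i j \<longleftrightarrow> E j i) \<and> (\<forall>i<n. \<not> E i i)"

definition num_edges :: "nat \<Rightarrow> (nat \<Rightarrow> nat \<Rightarrow> bool) \<Rightarrow> nat" where
  "num_edges n E = card {(i, j). i < j \<and> j < n \<and> E i j}"

definition vdeg :: "nat \<Rightarrow> (nat \<Rightarrow> nat \<Rightarrow> bool) \<Rightarrow> nat \<Rightarrow> nat" where
  "vdeg n E i = card {j. j < n \<and> E i j}"

definition adj_mat :: "nat \<Rightarrow> (nat \<Rightarrow> nat \<Rightarrow> bool) \<Rightarrow> real mat" where
  "adj_mat n E = mat n n (\<lambda>(i, j). if E i j then 1 else 0)"

definition eigenvalues_mset :: "real mat \<Rightarrow> complex multiset" where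
  "eigenvalues_mset A = proots (char_poly (map_mat complex_of_real A))"

definition graph_energy :: "nat \<Rightarrow> (nat \<Rightarrow> nat \<Rightarrow> bool) \<Rightarrow> real" where
  "graph_energy n E = sum_mset (image_mset cmod (eigenvalues_mset (adj_mat n E)))"

end

theory Submission
  imports Defs "Jordan_Normal_Form.Schur_Decomposition"
begin

definition ee :: "(nat \<Rightarrow> nat \<Rightarrow> bool) \<Rightarrow> nat \<Rightarrow> nat \<Rightarrow> complex" where
  "ee E i j = (if E i j then 1 else 0)"

lemma sum_ee: "(\<Sum>k<n. ee E i k * g k) = (\<Sum>k\<in>{k. k < n \<and> E i k}. g k)"
proof -
  have e: "{k. k < n \<and> E i k} = {k\<in>{..<n}. E i k}" by auto
  show ?thesis unfolding e sum.inter_filter[OF finite_lessThan]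
    by (intro sum.cong) (auto simp: ee_def)
qed

lemma eig_bound:
  assumes ev: "eigenvalue (map_mat complex_of_real (adj_mat n E)) a"
  shows "\<exists>i<n. cmod a ^ 2 \<le> real (\<Sum>j\<in>{j. j < n \<and> E i j}. vdeg n E j)"
proof -
  let ?C = "map_mat complex_of_real (adj_mat n E)"
  obtain v where v: "v \<in> carrier_vec n" "v \<noteq> 0\<^sub>v n" "?C *\<^sub>v v = a \<cdot>\<^sub>v v"
    using ev unfolding eigenvalue_def eigenvector_def by (auto simp: adj_mat_def)
  have row: "(\<Sum>k<n. ee E i k * v$k) = a * v$i" if "i < n" for i
  proof -
    have "(?C *\<^sub>v v) $ i = a * v$i" using v(1) that by (simp add: v(3))
    moreover have "(?C *\<^sub>v v) $ i = (\<Sum>k<n. ee E i k * v$k)"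
      using v(1) that by (simp add: adj_mat_def scalar_prod_def atLeast0LessThan ee_def, intro sum.cong, auto)
    ultimately show ?thesis by simp
  qed
  obtain j0 where j0: "j0 < n" "v$j0 \<noteq> 0"
    using v(1,2) by (metis eq_vecI carrier_vecD index_zero_vec(1,2))
  define f where "f = (\<lambda>j. cmod (v$j))"
  have fin: "finite (f ` {..<n})" "f ` {..<n} \<noteq> {}" using j0 by auto
  obtain i where i: "i < n" "f i = Max (f ` {..<n})"
    using Max_in[OF fin] by auto
  have fmax: "f j \<le> f i" if "j < n" for j using i that fin by auto
  have fi: "f i > 0" using fmax[OF j0(1)] j0(2) by (simp add: f_def) (smt (verit) norm_ge_zero zero_less_norm_iff)
  have "a^2 * v$i = (\<Sum>k<n. ee E i k * (a * v$k))"
    proof -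
    have "(\<Sum>k<n. ee E i k * (a * v$k)) = a * (\<Sum>k<n. ee E i k * v$k)"
      by (simp add: sum_distrib_left algebra_simps)
    thus ?thesis using row[OF i(1)] by (simp add: power2_eq_square)
  qed
  also have "\<dots> = (\<Sum>k<n. ee E i k * (\<Sum>j<n. ee E k j * v$j))"
    by (intro sum.cong refl) (simp add: row)
  finally have eq: "a^2 * v$i = (\<Sum>k\<in>{k. k < n \<and> E i k}. (\<Sum>j<n. ee E k j * v$j))"
    by (simp add: sum_ee)
  have "cmod a ^ 2 * f i = cmod (a^2 * v$i)" by (simp add: f_def norm_mult norm_power)
  also have "\<dots> \<le> (\<Sum>k\<in>{k. k < n \<and> E i k}. cmod (\<Sum>j<n. ee E k j * v$j))"
    unfolding eq by (rule norm_sum)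
  also have "\<dots> \<le> (\<Sum>k\<in>{k. k < n \<and> E i k}. real (vdeg n E k) * f i)"
  proof (intro sum_mono)
    fix k assume "k \<in> {k. k < n \<and> E i k}"
    have "cmod (\<Sum>j<n. ee E k j * v$j) = cmod (\<Sum>j\<in>{j. j < n \<and> E k j}. v$j)"
      by (simp add: sum_ee)
    also have "\<dots> \<le> (\<Sum>j\<in>{j. j < n \<and> E k j}. f j)" unfolding f_def by (rule norm_sum)
    also have "\<dots> \<le> (\<Sum>j\<in>{j. j < n \<and> E k j}. f i)" by (intro sum_mono) (auto intro: fmax)
    also have "\<dots> = real (vdeg n E k) * f i" by (simp add: vdeg_def)
    finally show "cmod (\<Sum>j<n. ee E k j * v$j) \<le> real (vdeg n E k) * f i" .
  qed
  also have "\<dots> = real (\<Sum>j\<in>{j. j < n \<and> E i j}. vdeg n E j) * f i"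
    by (simp add: sum_distrib_right)
  finally have "cmod a ^ 2 * f i \<le> real (\<Sum>j\<in>{j. j < n \<and> E i j}. vdeg n E j) * f i" .
  with fi have "cmod a ^ 2 \<le> real (\<Sum>j\<in>{j. j < n \<and> E i j}. vdeg n E j)"
    by (simp add: mult_le_cancel_right)
  with i(1) show ?thesis by blast
qed


lemma tr_comm:
  fixes X Y :: "'a::comm_ring_1 mat"
  assumes "X \<in> carrier_mat n n" "Y \<in> carrier_mat n n"
  shows "(\<Sum>i<n. (X*Y)$$(i,i)) = (\<Sum>i<n. (Y*X)$$(i,i))"
proof -
  have "(\<Sum>i<n. (X*Y)$$(i,i)) = (\<Sum>i<n. \<Sum>k<n. X$$(i,k) * Y$$(k,i))"
    using assms by (intro sum.cong) (auto simp: scalar_prod_def atLeast0LessThan)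
  also have "\<dots> = (\<Sum>k<n. \<Sum>i<n. Y$$(k,i) * X$$(i,k))"
    by (subst sum.swap) (simp add: mult.commute)
  also have "\<dots> = (\<Sum>i<n. (Y*X)$$(i,i))"
    using assms by (intro sum.cong) (auto simp: scalar_prod_def atLeast0LessThan)
  finally show ?thesis .
qed

lemma pow2_mat: "X \<in> carrier_mat n n \<Longrightarrow> X ^\<^sub>m 2 = X * X"
  by (simp add: numeral_2_eq_2)

lemma proots_lin: "proots (\<Prod>a\<leftarrow>xs. [:- a, 1:]) = mset (xs :: complex list)"
proof (induction xs)
  case Nil thus ?case by simp
next
  case (Cons x xs)
  have nz: "(\<Prod>a\<leftarrow>xs. [:- a, 1:]) \<noteq> (0::complex poly)"
    by (auto simp: prod_list_zero_iff)
  have "proots (\<Prod>a\<leftarrow>x # xs. [:- a, 1:]) = proots [:- x, 1:] + proots (\<Prod>a\<leftarrow>xs. [:- a, 1:])"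
    using nz proots_mult[of "[:- x, 1:]" "\<Prod>a\<leftarrow>xs. [:- a, 1:]"] by simp
  thus ?case using Cons by simp
qed

lemma spectral:
  fixes A :: "complex mat"
  assumes A: "A \<in> carrier_mat n n"
  obtains Bx where "Bx \<in> carrier_mat n n" "proots (char_poly A) = mset (diag_mat Bx)"
    "\<And>i. i < n \<Longrightarrow> eigenvalue A (Bx$$(i,i))"
    "(\<Sum>i<n. (Bx$$(i,i))^2) = (\<Sum>i<n. (A*A)$$(i,i))"
proof -
  obtain es where es: "char_poly A = (\<Prod>a\<leftarrow>es. [:- a, 1:])"
    using char_poly_factorized[OF A] by auto
  define B where "B = schur_upper_triangular A es"
  have B: "B \<in> carrier_mat n n" "upper_triangular B" "similar_mat A B"
    using schur_upper_triangular[OF A es] unfolding B_def by auto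
  have cp: "char_poly A = (\<Prod>a\<leftarrow>diag_mat B. [:- a, 1:])"
    using char_poly_similar[OF B(3)] char_poly_upper_triangular[OF B(1,2)] by simp
  have pr: "proots (char_poly A) = mset (diag_mat B)"
  proof -
    have "proots (\<Prod>a\<leftarrow>diag_mat B. [:- a, 1:]) = mset (diag_mat B)"
      by (rule proots_lin)
    thus ?thesis using cp by simp
  qed
  have ev: "eigenvalue A (B$$(i,i))" if "i < n" for i
  proof -
    have "B$$(i,i) \<in> set (diag_mat B)" using that B(1) by (auto simp: diag_mat_def)
    hence "poly (char_poly A) (B$$(i,i)) = 0" unfolding cp by (rule linear_poly_root)
    thus ?thesis using eigenvalue_root_char_poly[OF A] by simp
  qed
  obtain P Q where wit: "similar_mat_wit A B P Q" using B(3) unfolding similar_mat_def by auto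
  note w = similar_mat_witD2[OF A wit]
  have AA: "A * A = P * (B * B) * Q"
    using similar_mat_witD2(3)[OF _ similar_mat_wit_pow[OF wit, of 2], of n n] A B(1) by (simp add: pow2_mat)
  have "(\<Sum>i<n. (A*A)$$(i,i)) = (\<Sum>i<n. (Q * (P * (B*B)))$$(i,i))"
    unfolding AA by (rule tr_comm) (use w in auto)
  also have "Q * (P * (B*B)) = (Q * P) * (B * B)"
    using w B(1) by (intro assoc_mult_mat[symmetric]) auto
  also have "\<dots> = B * B" using w by simp
  also have "(\<Sum>i<n. (B*B)$$(i,i)) = (\<Sum>i<n. (B$$(i,i))^2)"
  proof (intro sum.cong refl)
    fix i assume i: "i \<in> {..<n}"
    have "(B*B)$$(i,i) = (\<Sum>k<n. B$$(i,k) * B$$(k,i))"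
      using i B(1) by (auto simp: scalar_prod_def atLeast0LessThan)
    also have "\<dots> = (\<Sum>k<n. if k = i then (B$$(i,i))^2 else 0)"
    proof (intro sum.cong refl)
      fix k assume k: "k \<in> {..<n}"
      show "B$$(i,k) * B$$(k,i) = (if k = i then (B$$(i,i))^2 else 0)"
      proof (cases "k < i")
        case True thus ?thesis using B(1,2) i by (auto simp: upper_triangular_def)
      next
        case False
        thus ?thesis using B(1,2) k by (cases "k = i") (auto simp: upper_triangular_def power2_eq_square)
      qed
    qed
    also have "\<dots> = (B$$(i,i))^2" using i by simp
    finally show "(B*B)$$(i,i) = (B$$(i,i))^2" .
  qed
  finally show ?thesis using that[OF B(1) pr ev] by simp
qed


lemma deg_sum:
  assumes sg: "simple_graph n E"
  shows "(\<Sum>i<n. vdeg n E i) = 2 * num_edges n E"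
proof -
  define S1 where "S1 = {(i, j). i < j \<and> j < n \<and> E i j}"
  define S2 where "S2 = (\<lambda>(i,j). (j,i)) ` S1"
  have fin1: "finite S1"
    by (rule finite_subset[of _ "{..<n} \<times> {..<n}"]) (auto simp: S1_def)
  have "(\<Sum>i<n. vdeg n E i) = card (SIGMA i:{..<n}. {k. k < n \<and> E i k})"
    by (subst card_SigmaI) (auto simp: vdeg_def)
  also have "(SIGMA i:{..<n}. {k. k < n \<and> E i k}) = S1 \<union> S2"
  proof -
    have "x \<in> S1 \<union> S2" if "x \<in> (SIGMA i:{..<n}. {k. k < n \<and> E i k})" for x
    proof -
      obtain i k where x0: "x = (i,k)" by (cases x)
      hence x: "x = (i,k)" "i < n" "k < n" "E i k" using that by auto
      have "i \<noteq> k" using sg x unfolding simple_graph_def by auto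
      moreover have "E k i" using sg x unfolding simple_graph_def by auto
      ultimately show ?thesis using x unfolding S1_def S2_def
        by (cases "i < k") (auto simp: image_iff)
    qed
    moreover have "S1 \<union> S2 \<subseteq> (SIGMA i:{..<n}. {k. k < n \<and> E i k})"
      using sg unfolding S1_def S2_def simple_graph_def by auto
    ultimately show ?thesis by blast
  qed
  also have "card (S1 \<union> S2) = card S1 + card S2"
    by (rule card_Un_disjoint) (use fin1 in \<open>auto simp: S1_def S2_def\<close>)
  also have "card S2 = card S1" unfolding S2_def
    by (rule card_image) (auto simp: inj_on_def)
  finally show ?thesis by (simp add: num_edges_def S1_def)
qed

theorem theorem5p1:
  fixes n :: nat and E :: "nat \<Rightarrow> nat \<Rightarrow> bool"
  assumes "simple_graph n E"
    and "num_edges n E \<ge> 1"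
  shows "graph_energy n E \<ge>
    2 * real (num_edges n E) /
      sqrt (Max {real (\<Sum>j\<in>{j. j < n \<and> E i j}. vdeg n E j) | i. i < n})"
proof -
  define M where "M = Max {real (\<Sum>j\<in>{j. j < n \<and> E i j}. vdeg n E j) | i. i < n}"
  define C where "C = map_mat complex_of_real (adj_mat n E)"
  have Cc: "C \<in> carrier_mat n n" by (simp add: C_def adj_mat_def)
  obtain B where B: "B \<in> carrier_mat n n" "proots (char_poly C) = mset (diag_mat B)"
    "\<And>i. i < n \<Longrightarrow> eigenvalue C (B$$(i,i))"
    "(\<Sum>i<n. (B$$(i,i))^2) = (\<Sum>i<n. (C*C)$$(i,i))"
    using spectral[OF Cc] by blast
  have en: "graph_energy n E = (\<Sum>i<n. cmod (B$$(i,i)))"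
    unfolding graph_energy_def eigenvalues_mset_def C_def[symmetric] B(2)
    using B(1) by (simp add: diag_mat_def mset_map sum_mset_sum_list
        sum_set_upt_conv_sum_list_nat[symmetric] atLeast0LessThan multiset.map_comp
        sum_unfold_sum_mset o_def)
  have finM: "finite {real (\<Sum>j\<in>{j. j < n \<and> E i j}. vdeg n E j) | i. i < n}"
  proof -
    have "{real (\<Sum>j\<in>{j. j < n \<and> E i j}. vdeg n E j) | i. i < n} =
      (\<lambda>i. real (\<Sum>j\<in>{j. j < n \<and> E i j}. vdeg n E j)) ` {..<n}" by auto
    thus ?thesis by simp
  qed
  have bnd: "cmod (B$$(i,i)) \<le> sqrt M" if ilt: "i < n" for i
  proof -
    obtain i' where "i' < n" "cmod (B$$(i,i)) ^ 2 \<le> real (\<Sum>j\<in>{j. j < n \<and> E i' j}. vdeg n E j)"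
      using eig_bound[OF B(3)[OF ilt, unfolded C_def]] by blast
    moreover have "real (\<Sum>j\<in>{j. j < n \<and> E i' j}. vdeg n E j) \<le> M"
      unfolding M_def by (rule Max_ge[OF finM]) (use \<open>i' < n\<close> in auto)
    ultimately show ?thesis by (intro real_le_rsqrt) simp
  qed
  have tr: "(\<Sum>i<n. (C*C)$$(i,i)) = of_nat (\<Sum>i<n. vdeg n E i)"
  proof -
    have "(C*C)$$(i,i) = of_nat (vdeg n E i)" if i: "i < n" for i
    proof -
      have "(C*C)$$(i,i) = (\<Sum>k<n. ee E i k * 1)"
        using i Cc assms(1) unfolding simple_graph_def
        by (auto simp: scalar_prod_def atLeast0LessThan C_def adj_mat_def ee_def intro!: sum.cong)
      also have "\<dots> = of_nat (vdeg n E i)" by (subst sum_ee) (simp add: vdeg_def)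
      finally show ?thesis .
    qed
    thus ?thesis by simp
  qed
  define s where "s = (\<Sum>i<n. cmod (B$$(i,i)))"
  have s0: "s \<ge> 0" unfolding s_def by (simp add: sum_nonneg)
  have "2 * real (num_edges n E) = cmod (\<Sum>i<n. (B$$(i,i))^2)"
    unfolding B(4) tr deg_sum[OF assms(1)] by simp
  also have "\<dots> \<le> (\<Sum>i<n. cmod (B$$(i,i)) ^ 2)"
    by (rule order_trans[OF norm_sum]) (simp add: norm_power)
  also have "\<dots> \<le> (\<Sum>i<n. sqrt M * cmod (B$$(i,i)))"
    by (intro sum_mono) (simp add: power2_eq_square bnd mult_right_mono)
  also have "\<dots> = sqrt M * s" by (simp add: s_def sum_distrib_left)
  finally have key: "2 * real (num_edges n E) \<le> sqrt M * s" .
  show ?thesis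
  proof (cases "sqrt M > 0")
    case True
    thus ?thesis using key unfolding en s_def[symmetric] M_def[symmetric]
      by (simp add: divide_le_eq mult.commute)
  next
    case False
    thus ?thesis using s0 unfolding en s_def[symmetric] M_def[symmetric]
      by (smt (verit) divide_nonneg_nonpos of_nat_0_le_iff)
  qed
qed

end
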